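(* For any measurable loss function $\ell:\mathcal{W}\times\mathcal{Z}\to[0,\infty)$, any distributions $\mu,\mu'$ on $\mathcal{Z}$, any $n\ge 1$ and any learning algorithm $\mathsf{A}$ run on a training set $S'\sim(\mu')^{\otimes n}$, \[ \mathrm{gen}(\mu,\mu',\mathsf{A})\le \mathsf{D}_2\!\left(\frac{I(S';\mathsf{A}(S'))}{n}\right), \] where for $r\ge 0$ \[ \mathsf{D}_2(r)\triangleq \sup_{P_{\hat W|Z'}:\ I(\hat W;Z')\le r}\ \mathbb{E}\big[L_\mu(\hat W)-\ell(\hat W,Z')\big], \] the supremum being over all Markov kernels $P_{\hat W|Z'}$ from $\mathcal{Z}$ to $\mathcal{W}$, with $Z'\sim\mu'$ (a single sample).
   Context: Setup: $\mathcal{Z}$ (instance space) and $\mathcal{W}$ (hypothesis space) are measurable spaces and $\ell:\mathcal{W}\times\mathcal{Z}\to[0,\infty)$ is a measurable loss. $\mu$ (test distribution) and $\mu'$ (training distribution) are probability distributions on $\mathcal{Z}$. The training set is $S'=(Z'_1,\dots,Z'_n)$ with $Z'_i$ i.i.d. $\sim\mu'$. A learning algorithm $\mathsf{A}$ is a Markov kernel from $\mathcal{Z}^n$ to $\mathcal{W}$, and $W'=\mathsf{A}(S')$. For $w\in\mathcal{W}$, $L_\mu(w)=\mathbb{E}_{Z\sim\mu}[\ell(w,Z)]$, and for $s=(z_1,\dots,z_n)$, $L_s(w)=\frac1n\sum_{i=1}^n\ell(w,z_i)$. The generalization error is $\mathrm{gen}(\mu,\mu',\mathsf{A})=\mathbb{E}[L_\mu(W')-L_{S'}(W')]$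 (all expectations assumed well defined). $I(\cdot;\cdot)$ denotes mutual information. *)

theory Defs
  imports "HOL-Probability.Probability"
begin

text \<open>Kullback-Leibler divergence D(P || Q) with values in the extended reals
  (natural logarithm): infinite unless P is absolutely continuous w.r.t. Q;
  otherwise the integral of f ln f with f = dP/dQ, where the positive and
  negative parts are integrated separately (the negative part is always
  finite when Q is a probability measure).\<close>
definition KL_div :: "'a measure \<Rightarrow> 'a measure \<Rightarrow> ereal" where
  "KL_div P Q =
     (if sets P = sets Q \<and> absolutely_continuous Q P then
        (let f = (\<lambda>x. enn2real (RN_deriv Q P x)) in
           enn2ereal (\<integral>\<^sup>+ x. ennreal (f x * ln (f x)) \<partial>Q)
         - enn2ereal (\<integral>\<^sup>+ x. ennreal (- (f x * ln (f x))) \<partial>Q))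
      else \<infinity>)"

definition mutual_info :: "'a measure \<Rightarrow> 'b measure \<Rightarrow> ('a \<times> 'b) measure \<Rightarrow> ereal" where
  "mutual_info A B P = KL_div P (distr P A fst \<Otimes>\<^sub>M distr P B snd)"

definition joint_law :: "'a measure \<Rightarrow> 'b measure \<Rightarrow> 'a measure \<Rightarrow> ('a \<Rightarrow> 'b measure) \<Rightarrow> ('a \<times> 'b) measure" where
  "joint_law A B M K = M \<bind> (\<lambda>x. K x \<bind> (\<lambda>y. return (A \<Otimes>\<^sub>M B) (x, y)))"

definition pop_risk :: "('w \<Rightarrow> 'z \<Rightarrow> real) \<Rightarrow> 'z measure \<Rightarrow> 'w \<Rightarrow> ennreal" where
  "pop_risk l \<mu> w = (\<integral>\<^sup>+ z. ennreal (l w z) \<partial>\<mu>)"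

definition emp_risk :: "('w \<Rightarrow> 'z \<Rightarrow> real) \<Rightarrow> nat \<Rightarrow> (nat \<Rightarrow> 'z) \<Rightarrow> 'w \<Rightarrow> real" where
  "emp_risk l n s w = (1 / real n) * (\<Sum>i<n. l w (s i))"

definition gen_err :: "'z measure \<Rightarrow> 'w measure \<Rightarrow> ('w \<Rightarrow> 'z \<Rightarrow> real) \<Rightarrow> 'z measure \<Rightarrow> 'z measure
    \<Rightarrow> nat \<Rightarrow> ((nat \<Rightarrow> 'z) \<Rightarrow> 'w measure) \<Rightarrow> ereal" where
  "gen_err Z W l \<mu> \<mu>' n A =
     (let J = joint_law (PiM {..<n} (\<lambda>_. Z)) W (PiM {..<n} (\<lambda>_. \<mu>')) A in
       enn2ereal (\<integral>\<^sup>+ p. pop_risk l \<mu> (snd p) \<partial>J)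
     - enn2ereal (\<integral>\<^sup>+ p. ennreal (emp_risk l n (fst p) (snd p)) \<partial>J))"

definition gen_err_defined :: "'z measure \<Rightarrow> 'w measure \<Rightarrow> ('w \<Rightarrow> 'z \<Rightarrow> real) \<Rightarrow> 'z measure \<Rightarrow> 'z measure
    \<Rightarrow> nat \<Rightarrow> ((nat \<Rightarrow> 'z) \<Rightarrow> 'w measure) \<Rightarrow> bool" where
  "gen_err_defined Z W l \<mu> \<mu>' n A =
     (let J = joint_law (PiM {..<n} (\<lambda>_. Z)) W (PiM {..<n} (\<lambda>_. \<mu>')) A in
       \<not> ((\<integral>\<^sup>+ p. pop_risk l \<mu> (snd p) \<partial>J) = \<infinity> \<and>
          (\<integral>\<^sup>+ p. ennreal (emp_risk l n (fst p) (snd p)) \<partial>J) = \<infinity>))"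

text \<open>D_2(r) = sup over Markov kernels P_{What|Z'} from Z to W with I(What;Z') <= r
  of E[L_mu(What) - l(What,Z')], Z' ~ mu' (single sample); only kernels for which
  the expectation is well defined (not of the form infinity - infinity) are included.\<close>
definition D2 :: "'z measure \<Rightarrow> 'w measure \<Rightarrow> ('w \<Rightarrow> 'z \<Rightarrow> real) \<Rightarrow> 'z measure \<Rightarrow> 'z measure
    \<Rightarrow> ereal \<Rightarrow> ereal" where
  "D2 Z W l \<mu> \<mu>' r = Sup
     { enn2ereal (\<integral>\<^sup>+ p. pop_risk l \<mu> (snd p) \<partial>J) - enn2ereal (\<integral>\<^sup>+ p. ennreal (l (snd p) (fst p)) \<partial>J)
     | K J. K \<in> measurable Z (prob_algebra W) \<and> J = joint_law Z W \<mu>' K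
          \<and> mutual_info Z W J \<le> r
          \<and> \<not> ((\<integral>\<^sup>+ p. pop_risk l \<mu> (snd p) \<partial>J) = \<infinity> \<and>
               (\<integral>\<^sup>+ p. ennreal (l (snd p) (fst p)) \<partial>J) = \<infinity>) }"

end

theory Submission
  imports Defs
begin

lemma emeasure_distr_nn: "f \<in> M \<rightarrow>\<^sub>M N \<Longrightarrow> B \<in> sets N \<Longrightarrow> emeasure (distr M N f) B = (\<integral>\<^sup>+x. indicator B (f x) \<partial>M)"
proof -
  assume f: "f \<in> M \<rightarrow>\<^sub>M N" and B: "B \<in> sets N"
  have "emeasure (distr M N f) B = (\<integral>\<^sup>+x. indicator B x \<partial>distr M N f)" using B by simp
  also have "\<dots> = (\<integral>\<^sup>+x. indicator B (f x) \<partial>M)" by (rule nn_integral_distr[OF f]) (use B in simp)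
  finally show ?thesis .
qed

lemma sum_div_n:
  assumes "(1::nat) \<le> n" shows "(\<Sum>i<n. (c::ennreal)) / of_nat n = c"
proof -
  have "(\<Sum>i<n. c) = c * of_nat n" by (simp add: mult.commute)
  moreover have "of_nat n \<noteq> (0::ennreal)" using assms by simp
  moreover have "of_nat n \<noteq> (top::ennreal)" by simp
  ultimately show ?thesis by (simp add: mult_divide_eq_ennreal)
qed

lemma jl_kernel:
  assumes K: "K \<in> X \<rightarrow>\<^sub>M prob_algebra Y"
  shows "(\<lambda>x. K x \<bind> (\<lambda>y. return (X \<Otimes>\<^sub>M Y) (x, y))) \<in> X \<rightarrow>\<^sub>M prob_algebra (X \<Otimes>\<^sub>M Y)"
proof (rule measurable_bind_prob_space2[OF K])
  show "(\<lambda>(x, y). return (X \<Otimes>\<^sub>M Y) (x, y)) \<in> X \<Otimes>\<^sub>M Y \<rightarrow>\<^sub>M prob_algebra (X \<Otimes>\<^sub>M Y)"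
    using measurable_return_prob_space[of "X \<Otimes>\<^sub>M Y"] by (simp add: case_prod_beta')
qed

lemma jl_facts:
  assumes M: "prob_space M" "sets M = sets X" and K: "K \<in> X \<rightarrow>\<^sub>M prob_algebra Y"
  shows "prob_space (joint_law X Y M K)" "sets (joint_law X Y M K) = sets (X \<Otimes>\<^sub>M Y)"
    "space (joint_law X Y M K) = space (X \<Otimes>\<^sub>M Y)"
proof -
  have Ms: "M \<in> space (prob_algebra X)" using M by (simp add: space_prob_algebra)
  note k = jl_kernel[OF K]
  show "prob_space (joint_law X Y M K)" unfolding joint_law_def by (rule prob_space_bind'[OF Ms k])
  show s: "sets (joint_law X Y M K) = sets (X \<Otimes>\<^sub>M Y)" unfolding joint_law_def by (rule sets_bind'[OF Ms k])
  show "space (joint_law X Y M K) = space (X \<Otimes>\<^sub>M Y)" using sets_eq_imp_space_eq[OF s] .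
qed

lemma jl_nn:
  assumes M: "prob_space M" "sets M = sets X" and K: "K \<in> X \<rightarrow>\<^sub>M prob_algebra Y"
    and h: "h \<in> borel_measurable (X \<Otimes>\<^sub>M Y)"
  shows "(\<integral>\<^sup>+p. h p \<partial>joint_law X Y M K) = (\<integral>\<^sup>+x. \<integral>\<^sup>+y. h (x, y) \<partial>K x \<partial>M)"
proof -
  have k: "(\<lambda>x. K x \<bind> (\<lambda>y. return (X \<Otimes>\<^sub>M Y) (x, y))) \<in> M \<rightarrow>\<^sub>M subprob_algebra (X \<Otimes>\<^sub>M Y)"
    unfolding measurable_cong_sets[OF M(2) refl] by (rule measurable_prob_algebraD[OF jl_kernel[OF K]])
  have "(\<integral>\<^sup>+p. h p \<partial>joint_law X Y M K) = (\<integral>\<^sup>+x. \<integral>\<^sup>+p. h p \<partial>(K x \<bind> (\<lambda>y. return (X \<Otimes>\<^sub>M Y) (x, y))) \<partial>M)"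
    unfolding joint_law_def by (rule nn_integral_bind[OF h k])
  also have "\<dots> = (\<integral>\<^sup>+x. \<integral>\<^sup>+y. h (x, y) \<partial>K x \<partial>M)"
  proof (rule nn_integral_cong)
    fix x assume x: "x \<in> space M"
    then have xX: "x \<in> space X" using sets_eq_imp_space_eq[OF M(2)] by simp
    have Kx: "K x \<in> space (prob_algebra Y)" using measurable_space[OF K xX] .
    then have sK: "sets (K x) = sets Y" by (simp add: space_prob_algebra)
    have r: "(\<lambda>y. return (X \<Otimes>\<^sub>M Y) (x, y)) \<in> K x \<rightarrow>\<^sub>M subprob_algebra (X \<Otimes>\<^sub>M Y)"
      using xX by (simp add: measurable_cong_sets[OF sK refl])
    have "(\<integral>\<^sup>+p. h p \<partial>(K x \<bind> (\<lambda>y. return (X \<Otimes>\<^sub>M Y) (x, y)))) = (\<integral>\<^sup>+y. \<integral>\<^sup>+p. h p \<partial>return (X \<Otimes>\<^sub>M Y) (x, y) \<partial>K x)"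
      by (rule nn_integral_bind[OF h r])
    also have "\<dots> = (\<integral>\<^sup>+y. h (x, y) \<partial>K x)"
    proof (rule nn_integral_cong)
      fix y assume "y \<in> space (K x)"
      then have "(x, y) \<in> space (X \<Otimes>\<^sub>M Y)" using xX sets_eq_imp_space_eq[OF sK] by (simp add: space_pair_measure)
      then show "(\<integral>\<^sup>+p. h p \<partial>return (X \<Otimes>\<^sub>M Y) (x, y)) = h (x, y)"
        using h by (simp add: nn_integral_return)
    qed
    finally show "(\<integral>\<^sup>+p. h p \<partial>(K x \<bind> (\<lambda>y. return (X \<Otimes>\<^sub>M Y) (x, y)))) = (\<integral>\<^sup>+y. h (x, y) \<partial>K x)" .
  qed
  finally show ?thesis .
qed

lemma upd_meas:
  assumes "i \<in> I"
  shows "(\<lambda>p. (snd p)(i := fst p)) \<in> N \<Otimes>\<^sub>M PiM I (\<lambda>_. N) \<rightarrow>\<^sub>M PiM I (\<lambda>_. N)"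
  by (rule measurable_fun_upd[where J=I]) (use assms in auto)

lemma upd_meas1:
  assumes "i \<in> I" "z \<in> space N"
  shows "(\<lambda>s. s(i := z)) \<in> PiM I (\<lambda>_. N) \<rightarrow>\<^sub>M PiM I (\<lambda>_. N)"
  by (rule measurable_fun_upd[where J=I]) (use assms in auto)

lemma coord_swap:
  fixes n :: nat assumes N: "prob_space N" and i: "i < n" and F: "F \<in> borel_measurable (PiM {..<n} (\<lambda>_. N))"
  shows "(\<integral>\<^sup>+z. \<integral>\<^sup>+s. F (s(i:=z)) \<partial>PiM {..<n} (\<lambda>_. N) \<partial>N) = (\<integral>\<^sup>+s. F s \<partial>PiM {..<n} (\<lambda>_. N))"
proof -
  interpret product_prob_space "\<lambda>_. N" by (rule product_prob_spaceI) (rule N)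

  define I' where "I' = {..<n} - {i}"
  have I: "{..<n} = insert i I'" "finite I'" "i \<notin> I'" using i by (auto simp: I'_def)
  have F': "F \<in> borel_measurable (PiM (insert i I') (\<lambda>_. N))" using F I by simp
  have "(\<integral>\<^sup>+s. F s \<partial>PiM {..<n} (\<lambda>_. N)) = (\<integral>\<^sup>+ y. (\<integral>\<^sup>+ x. F (x(i := y)) \<partial>(Pi\<^sub>M I' (\<lambda>_. N))) \<partial>N)"
    unfolding I(1) by (rule product_nn_integral_insert_rev[OF I(2,3) F'])
  also have "\<dots> = (\<integral>\<^sup>+z. \<integral>\<^sup>+s. F (s(i:=z)) \<partial>PiM {..<n} (\<lambda>_. N) \<partial>N)"
  proof (rule nn_integral_cong)
    fix z assume z: "z \<in> space N"
    have Fz: "(\<lambda>s. F (s(i:=z))) \<in> borel_measurable (PiM (insert i I') (\<lambda>_. N))"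
      using measurable_comp[OF upd_meas1[of i "insert i I'" z N] F'] z by (simp add: comp_def)
    have "(\<integral>\<^sup>+s. F (s(i:=z)) \<partial>PiM {..<n} (\<lambda>_. N)) = (\<integral>\<^sup>+ x. (\<integral>\<^sup>+ y. F ((x(i := y))(i:=z)) \<partial>N) \<partial>(Pi\<^sub>M I' (\<lambda>_. N)))"
      unfolding I(1) by (rule product_nn_integral_insert[OF I(2,3) Fz])
    also have "\<dots> = (\<integral>\<^sup>+ x. F (x(i:=z)) \<partial>(Pi\<^sub>M I' (\<lambda>_. N)))"
      by (simp add: prob_space.emeasure_space_1[OF N])
    finally show "(\<integral>\<^sup>+ x. F (x(i := z)) \<partial>(Pi\<^sub>M I' (\<lambda>_. N))) = (\<integral>\<^sup>+s. F (s(i:=z)) \<partial>PiM {..<n} (\<lambda>_. N))" by simp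
  qed
  finally show ?thesis by simp
qed

locale gsetup =
  fixes Z :: "'z measure" and W :: "'w measure" and \<mu>' :: "'z measure" and n :: nat
    and A :: "(nat \<Rightarrow> 'z) \<Rightarrow> 'w measure"
  assumes mu': "prob_space \<mu>'" "sets \<mu>' = sets Z" and n: "1 \<le> n"
    and A0: "A \<in> PiM {..<n} (\<lambda>_. Z) \<rightarrow>\<^sub>M prob_algebra W"
begin

abbreviation "S \<equiv> PiM {..<n} (\<lambda>_. \<mu>')"
abbreviation "SZ \<equiv> PiM {..<n} (\<lambda>_. Z)"

lemma sets_S: "sets S = sets SZ"
  by (rule sets_PiM_cong) (auto simp: mu')

lemma space_S: "space S = space SZ"
  by (rule sets_eq_imp_space_eq[OF sets_S])

lemma space_mu': "space \<mu>' = space Z"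
  by (rule sets_eq_imp_space_eq[OF mu'(2)])

lemma A: "A \<in> S \<rightarrow>\<^sub>M prob_algebra W"
  unfolding measurable_cong_sets[OF sets_S refl] by (rule A0)

lemma prob_S: "prob_space S"
proof -
  interpret product_prob_space "\<lambda>_. \<mu>'" by (rule product_prob_spaceI) (rule mu')
  show ?thesis by (rule prob_space_PiM) (simp add: mu')
qed

definition Ki :: "nat \<Rightarrow> 'z \<Rightarrow> 'w measure" where
  "Ki i z = S \<bind> (\<lambda>s. A (s(i := z)))"

lemma Ki_meas:
  assumes i: "i < n"
  shows "Ki i \<in> Z \<rightarrow>\<^sub>M prob_algebra W"
proof -
  have Sp: "S \<in> space (prob_algebra S)" using prob_S by (simp add: space_prob_algebra)
  have u: "(\<lambda>p. (snd p)(i := fst p)) \<in> \<mu>' \<Otimes>\<^sub>M S \<rightarrow>\<^sub>M S"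
    by (rule upd_meas) (use i in auto)
  have u': "(\<lambda>p. (snd p)(i := fst p)) \<in> Z \<Otimes>\<^sub>M S \<rightarrow>\<^sub>M S"
  proof -
    have eq: "Z \<Otimes>\<^sub>M S \<rightarrow>\<^sub>M S = \<mu>' \<Otimes>\<^sub>M S \<rightarrow>\<^sub>M S"
      by (rule measurable_cong_sets) (auto simp: mu' intro!: sets_pair_measure_cong)
    show ?thesis unfolding eq by (rule u)
  qed
  have g: "(\<lambda>(z, s). A (s(i := z))) \<in> Z \<Otimes>\<^sub>M S \<rightarrow>\<^sub>M prob_algebra W"
    using measurable_comp[OF u' A] by (simp add: comp_def case_prod_beta')
  show ?thesis unfolding Ki_def
    by (rule measurable_bind_prob_space2[OF measurable_const[OF Sp] g])
qed

definition K :: "'z \<Rightarrow> 'w measure" where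
  "K z = measure_pmf (pmf_of_set {..<n}) \<bind> (\<lambda>i. Ki (if i < n then i else 0) z)"

lemma nonempty_n: "{..<n} \<noteq> {}"
proof
  assume "{..<n} = {}" then have "0 \<notin> {..<n}" by simp
  with n show False by simp
qed

lemma K_nn:
  assumes z: "z \<in> space Z" and h: "h \<in> borel_measurable W"
  shows "(\<integral>\<^sup>+w. h w \<partial>K z) = (\<Sum>i<n. \<integral>\<^sup>+w. h w \<partial>Ki i z) / of_nat n"
proof -
  have k: "(\<lambda>i. Ki (if i < n then i else 0) z) \<in> measure_pmf (pmf_of_set {..<n}) \<rightarrow>\<^sub>M subprob_algebra W"
    using measurable_space[OF measurable_prob_algebraD[OF Ki_meas] z] n
    by (auto simp: Pi_iff)
  have "(\<integral>\<^sup>+w. h w \<partial>K z) = (\<integral>\<^sup>+i. \<integral>\<^sup>+w. h w \<partial>Ki (if i < n then i else 0) z \<partial>measure_pmf (pmf_of_set {..<n}))"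
    unfolding K_def by (rule nn_integral_bind[OF h k])
  also have "\<dots> = (\<Sum>i<n. \<integral>\<^sup>+w. h w \<partial>Ki (if i < n then i else 0) z) / of_nat (card {..<n})"
    by (rule nn_integral_pmf_of_set[OF nonempty_n finite_lessThan])
  also have "\<dots> = (\<Sum>i<n. \<integral>\<^sup>+w. h w \<partial>Ki i z) / of_nat n"
    by simp
  finally show ?thesis .
qed

lemma K_meas: "K \<in> Z \<rightarrow>\<^sub>M prob_algebra W"
proof (rule measurable_prob_algebraI)
  have pm: "measure_pmf (pmf_of_set {..<n}) \<in> space (prob_algebra (count_space UNIV))"
    by (simp add: space_prob_algebra prob_space_measure_pmf)
  have k: "\<And>z. z \<in> space Z \<Longrightarrow> (\<lambda>i. Ki (if i < n then i else 0) z) \<in> count_space UNIV \<rightarrow>\<^sub>M prob_algebra W"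
    using measurable_space[OF Ki_meas] n by (auto simp: Pi_iff)
  have kk: "\<And>z. z \<in> space Z \<Longrightarrow> K z \<in> space (prob_algebra W)"
  proof -
    fix z assume z: "z \<in> space Z"
    have "(\<lambda>_::'z. measure_pmf (pmf_of_set {..<n}) \<bind> (\<lambda>i. Ki (if i < n then i else 0) z)) \<in> count_space {z} \<rightarrow>\<^sub>M prob_algebra W"
      by (rule measurable_bind_prob_space[OF measurable_const[OF pm] k[OF z]])
    from measurable_space[OF this, of z] show "K z \<in> space (prob_algebra W)" by (simp add: K_def)
  qed
  show "\<And>z. z \<in> space Z \<Longrightarrow> prob_space (K z)" using kk by (simp add: space_prob_algebra)
  show "K \<in> Z \<rightarrow>\<^sub>M subprob_algebra W"
  proof (rule measurable_subprob_algebra)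
    fix z assume "z \<in> space Z"
    then show "subprob_space (K z)" "sets (K z) = sets W" using kk[of z]
      by (auto simp: space_prob_algebra intro: prob_space_imp_subprob_space)
  next
    fix B assume B: "B \<in> sets W"
    have "(\<lambda>z. (\<Sum>i<n. emeasure (Ki i z) B) / of_nat n) \<in> borel_measurable Z"
      using measurable_emeasure_kernel[OF measurable_prob_algebraD[OF Ki_meas] B] by measurable
    then show "(\<lambda>z. emeasure (K z) B) \<in> borel_measurable Z"
    proof (rule measurable_cong[THEN iffD1, rotated])
      fix z assume z: "z \<in> space Z"
      have "emeasure (K z) B = (\<integral>\<^sup>+w. indicator B w \<partial>K z)"
        using kk[OF z] B by (simp add: space_prob_algebra)
      also have "\<dots> = (\<Sum>i<n. \<integral>\<^sup>+w. indicator B w \<partial>Ki i z) / of_nat n"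
        using B by (intro K_nn z) simp
      also have "\<dots> = (\<Sum>i<n. emeasure (Ki i z) B) / of_nat n"
      proof -
        have "\<And>i. i < n \<Longrightarrow> (\<integral>\<^sup>+w. indicator B w \<partial>Ki i z) = emeasure (Ki i z) B"
          using B measurable_space[OF Ki_meas z] by (subst nn_integral_indicator) (auto simp: space_prob_algebra)
        then show ?thesis by simp
      qed
      finally show "(\<Sum>i<n. emeasure (Ki i z) B) / of_nat n = emeasure (K z) B" by simp
    qed
  qed
qed

end

context gsetup begin

definition P where "P = joint_law SZ W S A"
definition Q where "Q = joint_law Z W \<mu>' K"

lemma P_facts: "prob_space P" "sets P = sets (SZ \<Otimes>\<^sub>M W)" "space P = space (SZ \<Otimes>\<^sub>M W)"
  unfolding P_def using jl_facts[OF prob_S sets_S A0] by auto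

lemma Q_facts: "prob_space Q" "sets Q = sets (Z \<Otimes>\<^sub>M W)" "space Q = space (Z \<Otimes>\<^sub>M W)"
  unfolding Q_def using jl_facts[OF mu' K_meas] by auto

lemma P_nn: "h \<in> borel_measurable (SZ \<Otimes>\<^sub>M W) \<Longrightarrow> (\<integral>\<^sup>+p. h p \<partial>P) = (\<integral>\<^sup>+s. \<integral>\<^sup>+w. h (s, w) \<partial>A s \<partial>S)"
  unfolding P_def by (rule jl_nn[OF prob_S sets_S A0])

lemma Q_nn: "h \<in> borel_measurable (Z \<Otimes>\<^sub>M W) \<Longrightarrow> (\<integral>\<^sup>+p. h p \<partial>Q) = (\<integral>\<^sup>+z. \<integral>\<^sup>+w. h (z, w) \<partial>K z \<partial>\<mu>')"
  unfolding Q_def by (rule jl_nn[OF mu' K_meas])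

lemma coord_meas: "i < n \<Longrightarrow> (\<lambda>p. (fst p i, snd p)) \<in> SZ \<Otimes>\<^sub>M W \<rightarrow>\<^sub>M Z \<Otimes>\<^sub>M W"
  by measurable

lemma coord_meas': "i < n \<Longrightarrow> (\<lambda>p. (fst p i, snd p)) \<in> S \<Otimes>\<^sub>M W \<rightarrow>\<^sub>M Z \<Otimes>\<^sub>M W"
proof -
  assume i: "i < n"
  have eq: "S \<Otimes>\<^sub>M W \<rightarrow>\<^sub>M Z \<Otimes>\<^sub>M W = SZ \<Otimes>\<^sub>M W \<rightarrow>\<^sub>M Z \<Otimes>\<^sub>M W"
    by (rule measurable_cong_sets) (auto simp: sets_S intro!: sets_pair_measure_cong)
  show ?thesis unfolding eq by (rule coord_meas[OF i])
qed

lemma mix: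
  assumes h: "h \<in> borel_measurable (Z \<Otimes>\<^sub>M W)"
  shows "(\<integral>\<^sup>+p. h p \<partial>Q) = (\<Sum>i<n. \<integral>\<^sup>+p. h (fst p i, snd p) \<partial>P) / of_nat n"
proof -
  define H where "H i t = (\<integral>\<^sup>+w. h (t i, w) \<partial>A t)" for i t
  have AS: "A \<in> S \<rightarrow>\<^sub>M subprob_algebra W" by (rule measurable_prob_algebraD[OF A])
  have hc: "\<And>i. i < n \<Longrightarrow> (\<lambda>(t, w). h (t i, w)) \<in> borel_measurable (S \<Otimes>\<^sub>M W)"
    using measurable_comp[OF coord_meas' h] by (simp add: comp_def case_prod_beta')
  have Hm: "\<And>i. i < n \<Longrightarrow> H i \<in> borel_measurable S"
    unfolding H_def by (rule nn_integral_measurable_subprob_algebra2[OF hc AS])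
  have RHS: "\<And>i. i < n \<Longrightarrow> (\<integral>\<^sup>+p. h (fst p i, snd p) \<partial>P) = (\<integral>\<^sup>+s. H i s \<partial>S)"
  proof -
    fix i assume i: "i < n"
    have "(\<lambda>p. h (fst p i, snd p)) \<in> borel_measurable (SZ \<Otimes>\<^sub>M W)"
      using measurable_comp[OF coord_meas[OF i] h] by (simp add: comp_def)
    from P_nn[OF this] show "(\<integral>\<^sup>+p. h (fst p i, snd p) \<partial>P) = (\<integral>\<^sup>+s. H i s \<partial>S)"
      by (simp add: H_def)
  qed
  have Kin: "\<And>z i. z \<in> space Z \<Longrightarrow> i < n \<Longrightarrow> (\<integral>\<^sup>+w. h (z, w) \<partial>Ki i z) = (\<integral>\<^sup>+s. H i (s(i := z)) \<partial>S)"
  proof -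
    fix z i assume z: "z \<in> space Z" and i: "i < n"
    have u: "(\<lambda>s. s(i := z)) \<in> S \<rightarrow>\<^sub>M S" by (rule upd_meas1) (use i z space_mu' in auto)
    have k: "(\<lambda>s. A (s(i := z))) \<in> S \<rightarrow>\<^sub>M subprob_algebra W"
      using measurable_comp[OF u AS] by (simp add: comp_def)
    have hz: "(\<lambda>w. h (z, w)) \<in> borel_measurable W" using h z by measurable
    show "(\<integral>\<^sup>+w. h (z, w) \<partial>Ki i z) = (\<integral>\<^sup>+s. H i (s(i := z)) \<partial>S)"
      unfolding Ki_def H_def by (simp add: nn_integral_bind[OF hz k])
  qed
  have am: "\<And>i. i < n \<Longrightarrow> (\<lambda>z. \<integral>\<^sup>+s. H i (s(i := z)) \<partial>S) \<in> borel_measurable \<mu>'"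
  proof -
    fix i assume i: "i < n"
    have u: "(\<lambda>p. (snd p)(i := fst p)) \<in> \<mu>' \<Otimes>\<^sub>M S \<rightarrow>\<^sub>M S"
      by (rule upd_meas) (use i in auto)
    have f: "(\<lambda>(z, s). H i (s(i := z))) \<in> borel_measurable (\<mu>' \<Otimes>\<^sub>M S)"
      using measurable_comp[OF u Hm[OF i]] by (simp add: comp_def case_prod_beta')
    have L: "(\<lambda>_. S) \<in> \<mu>' \<rightarrow>\<^sub>M subprob_algebra S"
      by (rule measurable_const) (use prob_S in \<open>simp add: space_subprob_algebra prob_space_imp_subprob_space\<close>)
    show "(\<lambda>z. \<integral>\<^sup>+s. H i (s(i := z)) \<partial>S) \<in> borel_measurable \<mu>'"
      using nn_integral_measurable_subprob_algebra2[OF f L] by simp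
  qed
  have "(\<integral>\<^sup>+p. h p \<partial>Q) = (\<integral>\<^sup>+z. \<integral>\<^sup>+w. h (z, w) \<partial>K z \<partial>\<mu>')" by (rule Q_nn[OF h])
  also have "\<dots> = (\<integral>\<^sup>+z. (\<Sum>i<n. \<integral>\<^sup>+s. H i (s(i := z)) \<partial>S) / of_nat n \<partial>\<mu>')"
  proof (rule nn_integral_cong)
    fix z assume "z \<in> space \<mu>'"
    then have z: "z \<in> space Z" by (simp add: space_mu')
    have hz: "(\<lambda>w. h (z, w)) \<in> borel_measurable W" using h z by measurable
    show "(\<integral>\<^sup>+w. h (z, w) \<partial>K z) = (\<Sum>i<n. \<integral>\<^sup>+s. H i (s(i := z)) \<partial>S) / of_nat n"
      using K_nn[OF z hz] Kin[OF z] by simp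
  qed
  also have "\<dots> = (\<Sum>i<n. \<integral>\<^sup>+z. \<integral>\<^sup>+s. H i (s(i := z)) \<partial>S \<partial>\<mu>') / of_nat n"
  proof -
    have "(\<integral>\<^sup>+z. (\<Sum>i<n. \<integral>\<^sup>+s. H i (s(i := z)) \<partial>S) \<partial>\<mu>') = (\<Sum>i<n. \<integral>\<^sup>+z. \<integral>\<^sup>+s. H i (s(i := z)) \<partial>S \<partial>\<mu>')"
      by (rule nn_integral_sum) (use am in auto)
    then show ?thesis using am by (simp add: nn_integral_divide borel_measurable_sum)
  qed
  also have "\<dots> = (\<Sum>i<n. \<integral>\<^sup>+s. H i s \<partial>S) / of_nat n"
    using coord_swap[OF mu'(1) _ Hm] by simp
  also have "\<dots> = (\<Sum>i<n. \<integral>\<^sup>+p. h (fst p i, snd p) \<partial>P) / of_nat n"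
    using RHS by simp
  finally show ?thesis .
qed

end

lemma jl_fst:
  assumes M: "prob_space M" "sets M = sets X" and K: "K \<in> X \<rightarrow>\<^sub>M prob_algebra Y"
  shows "distr (joint_law X Y M K) X fst = M"
proof (rule measure_eqI)
  show "sets (distr (joint_law X Y M K) X fst) = sets M" using M by simp
next
  fix B assume B: "B \<in> sets (distr (joint_law X Y M K) X fst)"
  then have BX: "B \<in> sets X" by simp
  note jf = jl_facts[OF M K]
  have mf: "fst \<in> joint_law X Y M K \<rightarrow>\<^sub>M X"
    unfolding measurable_cong_sets[OF jf(2) refl] by (rule measurable_fst)
  have "emeasure (distr (joint_law X Y M K) X fst) B = (\<integral>\<^sup>+p. indicator B (fst p) \<partial>joint_law X Y M K)"
    by (rule emeasure_distr_nn[OF mf BX])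
  also have "\<dots> = (\<integral>\<^sup>+x. \<integral>\<^sup>+y. indicator B x \<partial>K x \<partial>M)"
    using BX by (subst jl_nn[OF M K]) auto
  also have "\<dots> = (\<integral>\<^sup>+x. indicator B x \<partial>M)"
  proof (rule nn_integral_cong)
    fix x assume "x \<in> space M"
    then have "x \<in> space X" using sets_eq_imp_space_eq[OF M(2)] by simp
    then have "prob_space (K x)" using measurable_space[OF K] by (simp add: space_prob_algebra)
    then show "(\<integral>\<^sup>+y. indicator B x \<partial>K x) = indicator B x"
      by (simp add: prob_space.emeasure_space_1)
  qed
  also have "\<dots> = emeasure M B" using BX M by simp
  finally show "emeasure (distr (joint_law X Y M K) X fst) B = emeasure M B" .
qed

context gsetup begin

definition \<nu> where "\<nu> = distr P W snd"

lemma snd_P: "snd \<in> P \<rightarrow>\<^sub>M W"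
  unfolding measurable_cong_sets[OF P_facts(2) refl] by (rule measurable_snd)
lemma snd_Q: "snd \<in> Q \<rightarrow>\<^sub>M W"
  unfolding measurable_cong_sets[OF Q_facts(2) refl] by (rule measurable_snd)

lemma nu_facts: "prob_space \<nu>" "sets \<nu> = sets W" "space \<nu> = space W"
  unfolding \<nu>_def using prob_space.prob_space_distr[OF P_facts(1) snd_P] by auto

lemma P_fst: "distr P SZ fst = S"
  unfolding P_def by (rule jl_fst[OF prob_S sets_S A0])

lemma Q_fst: "distr Q Z fst = \<mu>'"
  unfolding Q_def by (rule jl_fst[OF mu' K_meas])

lemma mix_snd:
  assumes g: "g \<in> borel_measurable W"
  shows "(\<integral>\<^sup>+p. g (snd p) \<partial>Q) = (\<integral>\<^sup>+p. g (snd p) \<partial>P)"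
proof -
  have "(\<integral>\<^sup>+p. g (snd p) \<partial>Q) = (\<Sum>i<n. \<integral>\<^sup>+p. g (snd p) \<partial>P) / of_nat n"
    using mix[of "\<lambda>p. g (snd p)"] g by simp
  also have "\<dots> = (\<integral>\<^sup>+p. g (snd p) \<partial>P)"
    by (rule sum_div_n[OF n])
  finally show ?thesis .
qed

lemma Q_snd: "distr Q W snd = \<nu>"
proof (rule measure_eqI)
  show "sets (distr Q W snd) = sets \<nu>" by (simp add: nu_facts)
next
  fix B assume "B \<in> sets (distr Q W snd)"
  then have B: "B \<in> sets W" by simp
  have "emeasure (distr Q W snd) B = (\<integral>\<^sup>+p. indicator B (snd p) \<partial>Q)"
    by (rule emeasure_distr_nn[OF snd_Q B])
  also have "\<dots> = (\<integral>\<^sup>+p. indicator B (snd p) \<partial>P)" using B by (intro mix_snd) simp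
  also have "\<dots> = emeasure \<nu> B"
    unfolding \<nu>_def by (rule emeasure_distr_nn[OF snd_P B, symmetric])
  finally show "emeasure (distr Q W snd) B = emeasure \<nu> B" .
qed

end

lemma dens_nn:
  assumes R: "sigma_finite_measure R" and Pm: "prob_space Pm" and ac: "absolutely_continuous R Pm"
    and s: "sets Pm = sets R" and h: "h \<in> borel_measurable R"
  shows "(\<integral>\<^sup>+x. h x \<partial>Pm) = (\<integral>\<^sup>+x. ennreal (enn2real (RN_deriv R Pm x)) * h x \<partial>R)"
proof -
  interpret R: sigma_finite_measure R by (rule R)
  have sf: "sigma_finite_measure Pm" using Pm by (simp add: prob_space_imp_sigma_finite)
  have fin: "AE x in R. RN_deriv R Pm x \<noteq> \<infinity>" by (rule R.RN_deriv_finite[OF sf ac s])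
  have "(\<integral>\<^sup>+x. h x \<partial>Pm) = (\<integral>\<^sup>+x. RN_deriv R Pm x * h x \<partial>R)"
    by (rule R.RN_deriv_nn_integral[OF ac s h])
  also have "\<dots> = (\<integral>\<^sup>+x. ennreal (enn2real (RN_deriv R Pm x)) * h x \<partial>R)"
    by (rule nn_integral_cong_AE) (use fin in \<open>auto simp: less_top\<close>)
  finally show ?thesis .
qed

context gsetup begin

abbreviation "R \<equiv> S \<Otimes>\<^sub>M \<nu>"
abbreviation "R' \<equiv> \<mu>' \<Otimes>\<^sub>M \<nu>"

lemma prob_R: "prob_space R" by (rule prob_space_pair[OF prob_S nu_facts(1)])
lemma prob_R': "prob_space R'" by (rule prob_space_pair[OF mu'(1) nu_facts(1)])
lemma sf_R: "sigma_finite_measure R" using prob_R by (simp add: prob_space_imp_sigma_finite)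
lemma sf_R': "sigma_finite_measure R'" using prob_R' by (simp add: prob_space_imp_sigma_finite)

lemma sets_R: "sets R = sets (SZ \<Otimes>\<^sub>M W)"
  by (rule sets_pair_measure_cong) (auto simp: sets_S nu_facts)
lemma sets_R': "sets R' = sets (Z \<Otimes>\<^sub>M W)"
  by (rule sets_pair_measure_cong) (auto simp: mu' nu_facts)

lemma MI_P: "mutual_info SZ W P = KL_div P R"
  unfolding mutual_info_def P_fst \<nu>_def[symmetric] ..

lemma MI_Q: "mutual_info Z W Q = KL_div Q R'"
  unfolding mutual_info_def Q_fst Q_snd ..

lemma coord_int:
  assumes i: "i < n" and G: "G \<in> borel_measurable \<mu>'"
  shows "(\<integral>\<^sup>+s. G (s i) \<partial>S) = (\<integral>\<^sup>+z. G z \<partial>\<mu>')"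
proof -
  have iI: "i \<in> {..<n}" using i by simp
  have F: "(\<lambda>s. G (s i)) \<in> borel_measurable S"
    using measurable_comp[OF measurable_component_singleton[OF iI, of "\<lambda>_. \<mu>'"] G] by (simp add: comp_def)
  have "(\<integral>\<^sup>+s. G (s i) \<partial>S) = (\<integral>\<^sup>+z. \<integral>\<^sup>+s. G ((s(i:=z)) i) \<partial>S \<partial>\<mu>')"
    by (rule coord_swap[OF mu'(1) i F, symmetric])
  also have "\<dots> = (\<integral>\<^sup>+z. G z \<partial>\<mu>')"
    using prob_space.emeasure_space_1[OF prob_S] by simp
  finally show ?thesis .
qed

lemma R_coord:
  assumes i: "i < n" and g: "g \<in> borel_measurable (Z \<Otimes>\<^sub>M W)"
  shows "(\<integral>\<^sup>+p. g (fst p i, snd p) \<partial>R) = (\<integral>\<^sup>+p. g p \<partial>R')"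
proof -
  interpret S: prob_space S by (rule prob_S)
  interpret nu: prob_space \<nu> by (rule nu_facts(1))
  interpret mu: prob_space \<mu>' by (rule mu'(1))
  interpret p1: pair_sigma_finite S \<nu> ..
  interpret p2: pair_sigma_finite \<mu>' \<nu> ..
  have g': "g \<in> borel_measurable R'" unfolding measurable_cong_sets[OF sets_R' refl] by (rule g)
  have gc: "(\<lambda>p. g (fst p i, snd p)) \<in> borel_measurable R"
    unfolding measurable_cong_sets[OF sets_R refl] using measurable_comp[OF coord_meas[OF i] g] by (simp add: comp_def)
  have "(\<integral>\<^sup>+p. g (fst p i, snd p) \<partial>R) = (\<integral>\<^sup>+w. \<integral>\<^sup>+s. g (s i, w) \<partial>S \<partial>\<nu>)"
    using p1.nn_integral_snd[OF gc] by simp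
  also have "\<dots> = (\<integral>\<^sup>+w. \<integral>\<^sup>+z. g (z, w) \<partial>\<mu>' \<partial>\<nu>)"
  proof (rule nn_integral_cong)
    fix w assume w: "w \<in> space \<nu>"
    have "(\<lambda>z. g (z, w)) \<in> borel_measurable \<mu>'"
      using measurable_comp[OF measurable_Pair2'[of w \<nu> \<mu>'] g'] w by (simp add: comp_def)
    then show "(\<integral>\<^sup>+s. g (s i, w) \<partial>S) = (\<integral>\<^sup>+z. g (z, w) \<partial>\<mu>')"
      by (rule coord_int[OF i])
  qed
  also have "\<dots> = (\<integral>\<^sup>+p. g p \<partial>R')"
    using p2.nn_integral_snd[OF g'] by simp
  finally show ?thesis .
qed

end

lemma gibbs_real:
  fixes x :: real and y :: "nat \<Rightarrow> real"
  assumes x: "0 \<le> x" and y: "\<forall>i<n. 0 \<le> y i" and pos: "x = 0 \<or> (\<forall>i<n. 0 < y i)"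
  shows "x - (\<Prod>i<n. y i) \<le> x * ln x - (\<Sum>i<n. x * ln (y i))"
proof (cases "x = 0")
  case True
  then show ?thesis using y by (auto intro!: prod_nonneg)
next
  case False
  then have xp: "0 < x" using x by simp
  have yp: "\<forall>i<n. 0 < y i" using pos False by simp
  define G where "G = (\<Prod>i<n. y i)"
  have Gp: "0 < G" unfolding G_def using yp by (auto intro: prod_pos)
  have lnG: "ln G = (\<Sum>i<n. ln (y i))" unfolding G_def using yp by (subst ln_prod) auto
  have "ln (G / x) \<le> G / x - 1" by (rule ln_le_minus_one) (use Gp xp in simp)
  then have "ln G - ln x \<le> G / x - 1" using Gp xp by (simp add: ln_div)
  then have "x * (ln G - ln x) \<le> x * (G / x - 1)" using xp by (intro mult_left_mono) auto
  then have "x * ln G - x * ln x \<le> G - x" using xp by (simp add: algebra_simps)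
  then show ?thesis using lnG by (simp add: G_def sum_distrib_left[symmetric])
qed

lemma ennreal_max_0: "ennreal (max t 0) = ennreal t"
  by (cases "t \<ge> 0") (auto simp: max_def ennreal_neg)

lemma ennreal_mult_max: "0 \<le> x \<Longrightarrow> ennreal x * ennreal t = ennreal (x * max t 0)"
proof -
  assume x: "0 \<le> x"
  have "ennreal x * ennreal t = ennreal x * ennreal (max t 0)" by (simp only: ennreal_max_0)
  also have "\<dots> = ennreal (x * max t 0)" by (rule ennreal_mult[symmetric]) (use x in auto)
  finally show ?thesis .
qed

lemma sum_ennreal_mult_max:
  "0 \<le> x \<Longrightarrow> (\<Sum>i<n. ennreal x * ennreal (t i)) = ennreal (\<Sum>i<n. x * max (t i) 0)"
proof -
  assume x: "0 \<le> x"
  have "(\<Sum>i<n. ennreal x * ennreal (t i)) = (\<Sum>i<n. ennreal (x * max (t i) 0))"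
    using x by (simp only: ennreal_mult_max)
  also have "\<dots> = ennreal (\<Sum>i<n. x * max (t i) 0)"
    by (rule sum_ennreal) (use x in auto)
  finally show ?thesis .
qed

lemma gibbs_pt:
  fixes x :: real and y :: "nat \<Rightarrow> real"
  assumes x: "0 \<le> x" and y: "\<forall>i<n. 0 \<le> y i" and pos: "x = 0 \<or> (\<forall>i<n. 0 < y i)"
  shows "(\<Sum>i<n. ennreal x * ennreal (ln (y i))) + ennreal x + ennreal (-(x * ln x))
    \<le> ennreal (x * ln x) + (\<Sum>i<n. ennreal x * ennreal (- ln (y i))) + ennreal (\<Prod>i<n. y i)"
proof -
  have Gn: "0 \<le> (\<Prod>i<n. y i)" using y by (auto intro!: prod_nonneg)
  have s1: "0 \<le> (\<Sum>i<n. x * max (ln (y i)) 0)" using x by (auto intro!: sum_nonneg)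
  have s2: "0 \<le> (\<Sum>i<n. x * max (- ln (y i)) 0)" using x by (auto intro!: sum_nonneg)
  have L: "(\<Sum>i<n. ennreal x * ennreal (ln (y i))) + ennreal x + ennreal (-(x * ln x))
     = ennreal ((\<Sum>i<n. x * max (ln (y i)) 0) + x + max (-(x * ln x)) 0)"
    unfolding sum_ennreal_mult_max[OF x] ennreal_max_0[symmetric, of "-(x * ln x)"]
    using s1 x by (simp only: ennreal_plus)
  have Rr: "ennreal (x * ln x) + (\<Sum>i<n. ennreal x * ennreal (- ln (y i))) + ennreal (\<Prod>i<n. y i)
     = ennreal (max (x * ln x) 0 + (\<Sum>i<n. x * max (- ln (y i)) 0) + (\<Prod>i<n. y i))"
    unfolding sum_ennreal_mult_max[OF x] ennreal_max_0[symmetric, of "x * ln x"]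
    using s2 Gn by (subst ennreal_plus[symmetric], simp, simp)+ simp
  have key: "x - (\<Prod>i<n. y i) \<le> x * ln x - (\<Sum>i<n. x * ln (y i))" by (rule gibbs_real[OF x y pos])
  have e1: "\<And>t. x * max t 0 - x * max (-t) 0 = x * t" by (simp add: max_def algebra_simps)
  have "(\<Sum>i<n. x * max (ln (y i)) 0) - (\<Sum>i<n. x * max (- ln (y i)) 0) = (\<Sum>i<n. x * ln (y i))"
    by (simp add: sum_subtractf[symmetric] e1)
  moreover have "max (x * ln x) 0 - max (-(x * ln x)) 0 = x * ln x" by (simp add: max_def)
  ultimately have "(\<Sum>i<n. x * max (ln (y i)) 0) + x + max (-(x * ln x)) 0 \<le> max (x * ln x) 0 + (\<Sum>i<n. x * max (- ln (y i)) 0) + (\<Prod>i<n. y i)"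
    using key by linarith
  then show ?thesis unfolding L Rr by (rule ennreal_leI)
qed

lemma neg_xlnx_le1: "0 \<le> (x::real) \<Longrightarrow> -(x * ln x) \<le> 1"
proof (cases "x = 0")
  case False
  assume x: "0 \<le> x"
  then have xp: "0 < x" using False by simp
  have "ln (1/x) \<le> 1/x - 1" by (rule ln_le_minus_one) (use xp in simp)
  then have "- ln x \<le> 1/x - 1" using xp by (simp add: ln_div)
  then have "x * (- ln x) \<le> x * (1/x - 1)" using xp by (intro mult_left_mono) auto
  then show ?thesis using xp x by (simp add: algebra_simps)
qed simp

lemma ennreal_neg_xlnx_le1: "0 \<le> (x::real) \<Longrightarrow> ennreal (-(x * ln x)) \<le> 1"
  using neg_xlnx_le1[of x] by (simp add: ennreal_le_1)

context gsetup begin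

lemma mix_mult:
  assumes h: "h \<in> borel_measurable (Z \<Otimes>\<^sub>M W)"
  shows "of_nat n * (\<integral>\<^sup>+p. h p \<partial>Q) = (\<Sum>i<n. \<integral>\<^sup>+p. h (fst p i, snd p) \<partial>P)"
proof -
  have nz: "of_nat n \<noteq> (0::ennreal)" using n by simp
  have "of_nat n * (\<integral>\<^sup>+p. h p \<partial>Q) = (\<Sum>i<n. \<integral>\<^sup>+p. h (fst p i, snd p) \<partial>P) * of_nat n / of_nat n"
    unfolding mix[OF h] by (simp add: ennreal_times_divide mult.commute)
  also have "\<dots> = (\<Sum>i<n. \<integral>\<^sup>+p. h (fst p i, snd p) \<partial>P)"
    using nz by (simp add: mult_divide_eq_ennreal)
  finally show ?thesis .
qed

lemma sP: "sets P = sets R" using P_facts sets_R by simp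
lemma sQ: "sets Q = sets R'" using Q_facts sets_R' by simp

lemma P_null_transfer:
  assumes ac: "absolutely_continuous R P" and h: "h \<in> borel_measurable R" and z: "(\<integral>\<^sup>+x. h x \<partial>R) = 0"
  shows "(\<integral>\<^sup>+x. h x \<partial>P) = 0"
proof -
  have "AE x in R. h x = 0" using z nn_integral_0_iff_AE[OF h] by simp
  then have "AE x in P. h x = 0" by (rule absolutely_continuous_AE[OF sP ac])
  then have "(\<integral>\<^sup>+x. h x \<partial>P) = (\<integral>\<^sup>+x. 0 \<partial>P)" by (rule nn_integral_cong_AE)
  then show ?thesis by simp
qed

lemma Q_ac:
  assumes ac: "absolutely_continuous R P"
  shows "absolutely_continuous R' Q"
  unfolding absolutely_continuous_def
proof
  fix N assume N: "N \<in> null_sets R'"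
  then have NR: "N \<in> sets R'" and N0: "emeasure R' N = 0" by auto
  then have NZ: "N \<in> sets (Z \<Otimes>\<^sub>M W)" using sets_R' by simp
  have each: "\<And>i. i < n \<Longrightarrow> (\<integral>\<^sup>+p. indicator N (fst p i, snd p) \<partial>P) = 0"
  proof -
    fix i assume i: "i < n"
    have hm: "(\<lambda>p. indicator N (fst p i, snd p) :: ennreal) \<in> borel_measurable R"
      unfolding measurable_cong_sets[OF sets_R refl]
      using measurable_comp[OF coord_meas[OF i] borel_measurable_indicator[OF NZ]] by (simp add: comp_def)
    have "(\<integral>\<^sup>+p. indicator N (fst p i, snd p) \<partial>R) = (\<integral>\<^sup>+p. indicator N p \<partial>R')"
      by (rule R_coord[OF i]) (use NZ in simp)
    also have "\<dots> = 0" using NR N0 by simp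
    finally show "(\<integral>\<^sup>+p. indicator N (fst p i, snd p) \<partial>P) = 0"
      by (rule P_null_transfer[OF ac hm])
  qed
  have "emeasure Q N = (\<integral>\<^sup>+p. indicator N p \<partial>Q)" using NR sQ by simp
  also have "\<dots> = (\<Sum>i<n. \<integral>\<^sup>+p. indicator N (fst p i, snd p) \<partial>P) / of_nat n"
    by (rule mix) (use NZ in simp)
  also have "\<dots> = 0" using each by simp
  finally show "N \<in> null_sets Q" using NR sQ by auto
qed

end

context gsetup begin

lemma g_density_marg:
  assumes acQ: "absolutely_continuous R' Q"
  defines "g \<equiv> \<lambda>p. enn2real (RN_deriv R' Q p)"
  shows "AE w in \<nu>. (\<integral>\<^sup>+z. ennreal (g (z, w)) \<partial>\<mu>') = 1"
proof -
  interpret nu: prob_space \<nu> by (rule nu_facts(1))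
  interpret mu: prob_space \<mu>' by (rule mu'(1))
  interpret p2: pair_sigma_finite \<mu>' \<nu> ..
  have gm: "(\<lambda>p. ennreal (g p)) \<in> borel_measurable R'" unfolding g_def by measurable
  have gQ: "\<And>h. h \<in> borel_measurable R' \<Longrightarrow> (\<integral>\<^sup>+x. h x \<partial>Q) = (\<integral>\<^sup>+x. ennreal (g x) * h x \<partial>R')"
    unfolding g_def by (rule dens_nn[OF sf_R' Q_facts(1) acQ sQ])
  define a where "a w = (\<integral>\<^sup>+z. ennreal (g (z, w)) \<partial>\<mu>')" for w
  have gsw: "(\<lambda>(w, z). ennreal (g (z, w))) \<in> borel_measurable (\<nu> \<Otimes>\<^sub>M \<mu>')"
    using measurable_comp[OF measurable_pair_swap' gm] by (simp add: comp_def case_prod_beta')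
  have am: "a \<in> borel_measurable \<nu>"
    unfolding a_def using mu.borel_measurable_nn_integral[OF gsw] by simp
  have "density \<nu> a = density \<nu> (\<lambda>_. 1)"
  proof (rule measure_eqI)
    fix B assume "B \<in> sets (density \<nu> a)"
    then have B: "B \<in> sets \<nu>" by simp
    then have BW: "B \<in> sets W" using nu_facts by simp
    have ib: "(\<lambda>p. indicator B (snd p) :: ennreal) \<in> borel_measurable R'"
      using B by measurable
    have "emeasure (density \<nu> a) B = (\<integral>\<^sup>+w. a w * indicator B w \<partial>\<nu>)"
      by (rule emeasure_density[OF am B])
    also have "\<dots> = (\<integral>\<^sup>+w. \<integral>\<^sup>+z. ennreal (g (z, w)) * indicator B w \<partial>\<mu>' \<partial>\<nu>)"
      unfolding a_def by (intro nn_integral_cong nn_integral_multc[symmetric]) (use gm in measurable)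
    also have "\<dots> = (\<integral>\<^sup>+p. ennreal (g p) * indicator B (snd p) \<partial>R')"
      using p2.nn_integral_snd[of "\<lambda>p. ennreal (g p) * indicator B (snd p)"] gm ib by simp
    also have "\<dots> = (\<integral>\<^sup>+p. indicator B (snd p) \<partial>Q)" by (rule gQ[OF ib, symmetric])
    also have "\<dots> = emeasure (distr Q W snd) B" by (rule emeasure_distr_nn[OF snd_Q BW, symmetric])
    also have "\<dots> = emeasure \<nu> B" by (simp add: Q_snd)
    also have "\<dots> = emeasure (density \<nu> (\<lambda>_. 1)) B" by (simp add: density_1)
    finally show "emeasure (density \<nu> a) B = emeasure (density \<nu> (\<lambda>_. 1)) B" .
  qed simp
  then have "AE w in \<nu>. a w = 1" using nu.density_unique[OF am measurable_const] by simp
  then show ?thesis by (simp add: a_def)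
qed

end

context gsetup begin

lemma gi_meas:
  assumes g: "g \<in> borel_measurable R'" and i: "i < n"
  shows "(\<lambda>p. g (fst p i, snd p)) \<in> borel_measurable R"
proof -
  have g': "g \<in> borel_measurable (Z \<Otimes>\<^sub>M W)" using g unfolding measurable_cong_sets[OF sets_R' refl] .
  show ?thesis unfolding measurable_cong_sets[OF sets_R refl]
    using measurable_comp[OF coord_meas[OF i] g'] by (simp add: comp_def)
qed

lemma G_int:
  assumes acQ: "absolutely_continuous R' Q"
  defines "g \<equiv> \<lambda>p. enn2real (RN_deriv R' Q p)"
  shows "(\<integral>\<^sup>+p. ennreal (\<Prod>i<n. g (fst p i, snd p)) \<partial>R) = 1"
proof -
  interpret nu: prob_space \<nu> by (rule nu_facts(1))
  interpret S: prob_space S by (rule prob_S)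
  interpret p1: pair_sigma_finite S \<nu> ..
  interpret pp: product_prob_space "\<lambda>_. \<mu>'" by (rule product_prob_spaceI) (rule mu'(1))
  have gm: "g \<in> borel_measurable R'" unfolding g_def by measurable
  have gnn: "\<And>p. 0 \<le> g p" unfolding g_def by simp
  have Gm: "(\<lambda>p. ennreal (\<Prod>i<n. g (fst p i, snd p))) \<in> borel_measurable R"
    using gi_meas[OF gm] by (intro measurable_compose[OF _ measurable_ennreal] borel_measurable_prod) auto
  have ae: "AE w in \<nu>. (\<integral>\<^sup>+z. ennreal (g (z, w)) \<partial>\<mu>') = 1"
    using g_density_marg[OF acQ] unfolding g_def .
  have "(\<integral>\<^sup>+p. ennreal (\<Prod>i<n. g (fst p i, snd p)) \<partial>R) = (\<integral>\<^sup>+w. \<integral>\<^sup>+s. ennreal (\<Prod>i<n. g (s i, w)) \<partial>S \<partial>\<nu>)"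
    using p1.nn_integral_snd[OF Gm] by simp
  also have "\<dots> = (\<integral>\<^sup>+w. 1 \<partial>\<nu>)"
  proof (rule nn_integral_cong_AE)
    show "AE w in \<nu>. (\<integral>\<^sup>+s. ennreal (\<Prod>i<n. g (s i, w)) \<partial>S) = 1"
      using ae AE_space
    proof eventually_elim
      case (elim w)
      have "(\<integral>\<^sup>+s. ennreal (\<Prod>i<n. g (s i, w)) \<partial>S) = (\<integral>\<^sup>+s. (\<Prod>i<n. ennreal (g (s i, w))) \<partial>S)"
        using gnn by (simp add: prod_ennreal)
      also have "\<dots> = (\<Prod>i<n. \<integral>\<^sup>+z. ennreal (g (z, w)) \<partial>\<mu>')"
      proof -
        have wm: "(\<lambda>z. ennreal (g (z, w))) \<in> borel_measurable \<mu>'"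
          using measurable_comp[OF measurable_Pair2'[of w \<nu> \<mu>'] measurable_compose[OF gm measurable_ennreal]] elim
          by (simp add: comp_def)
        show ?thesis
          by (rule pp.product_nn_integral_prod[of "{..<n}" "\<lambda>i z. ennreal (g (z, w))"]) (use wm in auto)
      qed
      also have "\<dots> = 1" using elim by simp
      finally show ?case .
    qed
  qed
  also have "\<dots> = 1" by (simp add: nu.emeasure_space_1)
  finally show ?thesis .
qed

end

lemma final_alg:
  fixes Xp Xm Yp Ym :: ennreal and n :: nat
  assumes n: "1 \<le> n" and Xm: "Xm \<le> 1" and Ym: "Ym \<le> 1"
    and H: "of_nat n * Yp + 1 + Xm \<le> Xp + of_nat n * Ym + 1"
  shows "enn2ereal Yp - enn2ereal Ym \<le> (enn2ereal Xp - enn2ereal Xm) / ereal (real n)"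
proof -
  obtain xm where xm: "Xm = ennreal xm" "0 \<le> xm" using Xm by (cases Xm) (auto simp: top_unique)
  obtain ym where ym: "Ym = ennreal ym" "0 \<le> ym" using Ym by (cases Ym) (auto simp: top_unique)
  have np: "0 < real n" using n by simp
  show ?thesis
  proof (cases "Xp = top")
    case True
    then show ?thesis using np xm by (simp add: enn2ereal_top)
  next
    case False
    obtain xp where xp: "Xp = ennreal xp" "0 \<le> xp" using False by (cases Xp) auto
    have nn: "of_nat n = ennreal (real n)" by (rule ennreal_of_nat_eq_real_of_nat)
    have "of_nat n * Yp \<le> Xp + of_nat n * Ym + 1" using H by (metis add.assoc le_iff_add order.trans)
    also have "\<dots> < top" using xp ym by (simp add: nn ennreal_mult[symmetric] ennreal_plus[symmetric] del: ennreal_plus)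
    finally have "of_nat n * Yp < top" .
    then have "Yp \<noteq> top" using n by (auto simp: ennreal_mult_eq_top_iff)
    then obtain yp where yp: "Yp = ennreal yp" "0 \<le> yp" by (cases Yp) auto
    have "ennreal (real n * yp + 1 + xm) \<le> ennreal (xp + real n * ym + 1)"
      using H unfolding xp xm ym yp nn using xp xm ym yp by (simp add: ennreal_mult[symmetric] ennreal_plus[symmetric] del: ennreal_plus)
    then have r: "real n * yp + 1 + xm \<le> xp + real n * ym + 1"
      using xp ym by (subst (asm) ennreal_le_iff) auto
    have r2: "(yp - ym) * real n \<le> xp - xm" using r by (simp add: algebra_simps)
    have "yp - ym \<le> (xp - xm) / real n"
      by (subst pos_le_divide_eq[OF np]) (rule r2)
    then show ?thesis using xp xm ym yp np by simp
  qed
qed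

context gsetup begin

lemma MI_main: "KL_div Q R' \<le> KL_div P R / ereal (real n)"
proof (cases "absolutely_continuous R P")
  case False
  then have "KL_div P R = \<infinity>" using sP by (simp add: KL_div_def)
  then show ?thesis using n by simp
next
  case True
  note acP = True
  note acQ = Q_ac[OF acP]
  define f where "f p = enn2real (RN_deriv R P p)" for p
  define g where "g p = enn2real (RN_deriv R' Q p)" for p
  have fm: "f \<in> borel_measurable R" unfolding f_def by measurable
  have gm: "g \<in> borel_measurable R'" unfolding g_def by measurable
  have fnn: "\<And>p. 0 \<le> f p" unfolding f_def by simp
  have gnn: "\<And>p. 0 \<le> g p" unfolding g_def by simp
  have gZW: "g \<in> borel_measurable (Z \<Otimes>\<^sub>M W)" using gm unfolding measurable_cong_sets[OF sets_R' refl] .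
  have fP: "\<And>h. h \<in> borel_measurable R \<Longrightarrow> (\<integral>\<^sup>+x. h x \<partial>P) = (\<integral>\<^sup>+x. ennreal (f x) * h x \<partial>R)"
    unfolding f_def by (rule dens_nn[OF sf_R P_facts(1) acP sP])
  have gQ: "\<And>h. h \<in> borel_measurable R' \<Longrightarrow> (\<integral>\<^sup>+x. h x \<partial>Q) = (\<integral>\<^sup>+x. ennreal (g x) * h x \<partial>R')"
    unfolding g_def by (rule dens_nn[OF sf_R' Q_facts(1) acQ sQ])
  define Xp where "Xp = (\<integral>\<^sup>+x. ennreal (f x * ln (f x)) \<partial>R)"
  define Xm where "Xm = (\<integral>\<^sup>+x. ennreal (-(f x * ln (f x))) \<partial>R)"
  define Yp where "Yp = (\<integral>\<^sup>+x. ennreal (g x * ln (g x)) \<partial>R')"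
  define Ym where "Ym = (\<integral>\<^sup>+x. ennreal (-(g x * ln (g x))) \<partial>R')"
  have KP: "KL_div P R = enn2ereal Xp - enn2ereal Xm"
    using sP acP by (simp add: KL_div_def Let_def Xp_def Xm_def f_def)
  have KQ: "KL_div Q R' = enn2ereal Yp - enn2ereal Ym"
    using sQ acQ by (simp add: KL_div_def Let_def Yp_def Ym_def g_def)
  define gi :: "nat \<Rightarrow> (nat \<Rightarrow> 'z) \<times> 'w \<Rightarrow> real" where "gi i p = g (fst p i, snd p)" for i p
  have gim: "\<And>i. i < n \<Longrightarrow> gi i \<in> borel_measurable R"
    unfolding gi_def by (rule gi_meas[OF gm])
  define Bp where "Bp i = (\<integral>\<^sup>+p. ennreal (f p) * ennreal (ln (gi i p)) \<partial>R)" for i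
  define Bm where "Bm i = (\<integral>\<^sup>+p. ennreal (f p) * ennreal (- ln (gi i p)) \<partial>R)" for i
  have k1: "of_nat n * (\<integral>\<^sup>+x. ennreal (g x * (c * ln (g x))) \<partial>R') = (\<Sum>i<n. \<integral>\<^sup>+p. ennreal (f p) * ennreal (c * ln (gi i p)) \<partial>R)"
    for c :: real
  proof -
    have lm: "(\<lambda>x. ennreal (c * ln (g x))) \<in> borel_measurable (Z \<Otimes>\<^sub>M W)" using gZW by measurable
    have lm': "(\<lambda>x. ennreal (c * ln (g x))) \<in> borel_measurable R'" using gm by measurable
    have "(\<integral>\<^sup>+x. ennreal (g x * (c * ln (g x))) \<partial>R') = (\<integral>\<^sup>+x. ennreal (g x) * ennreal (c * ln (g x)) \<partial>R')"
      using gnn by (simp add: ennreal_mult')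
    also have "\<dots> = (\<integral>\<^sup>+x. ennreal (c * ln (g x)) \<partial>Q)" by (rule gQ[OF lm', symmetric])
    finally have e1: "(\<integral>\<^sup>+x. ennreal (g x * (c * ln (g x))) \<partial>R') = (\<integral>\<^sup>+x. ennreal (c * ln (g x)) \<partial>Q)" .
    have "of_nat n * (\<integral>\<^sup>+x. ennreal (c * ln (g x)) \<partial>Q) = (\<Sum>i<n. \<integral>\<^sup>+p. ennreal (c * ln (g (fst p i, snd p))) \<partial>P)"
      by (rule mix_mult[OF lm])
    also have "\<dots> = (\<Sum>i<n. \<integral>\<^sup>+p. ennreal (f p) * ennreal (c * ln (gi i p)) \<partial>R)"
    proof (rule sum.cong[OF refl])
      fix i assume "i \<in> {..<n}"
      then have "gi i \<in> borel_measurable R" using gim by simp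
      then have "(\<lambda>p. ennreal (c * ln (gi i p))) \<in> borel_measurable R" by measurable
      from fP[OF this] show "(\<integral>\<^sup>+p. ennreal (c * ln (g (fst p i, snd p))) \<partial>P) = (\<integral>\<^sup>+p. ennreal (f p) * ennreal (c * ln (gi i p)) \<partial>R)"
        by (simp add: gi_def)
    qed
    finally show ?thesis unfolding e1 .
  qed
  have kYp: "of_nat n * Yp = (\<Sum>i<n. Bp i)"
    using k1[of 1] by (simp add: Yp_def Bp_def)
  have kYm: "of_nat n * Ym = (\<Sum>i<n. Bm i)"
    using k1[of "-1"] by (simp add: Ym_def Bm_def)
  have Xm1: "Xm \<le> 1"
  proof -
    have "Xm \<le> (\<integral>\<^sup>+x. 1 \<partial>R)" unfolding Xm_def
      by (rule nn_integral_mono) (rule ennreal_neg_xlnx_le1[OF fnn])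
    also have "\<dots> = 1" using prob_space.emeasure_space_1[OF prob_R] by simp
    finally show ?thesis .
  qed
  have Ym1: "Ym \<le> 1"
  proof -
    have "Ym \<le> (\<integral>\<^sup>+x. 1 \<partial>R')" unfolding Ym_def
      by (rule nn_integral_mono) (rule ennreal_neg_xlnx_le1[OF gnn])
    also have "\<dots> = 1" using prob_space.emeasure_space_1[OF prob_R'] by simp
    finally show ?thesis .
  qed
  have k3: "(\<integral>\<^sup>+x. ennreal (f x) \<partial>R) = 1"
  proof -
    have "(\<integral>\<^sup>+x. 1 \<partial>P) = (\<integral>\<^sup>+x. ennreal (f x) * 1 \<partial>R)" by (rule fP) simp
    then show ?thesis using prob_space.emeasure_space_1[OF P_facts(1)] by simp
  qed
  have k4: "(\<integral>\<^sup>+p. ennreal (\<Prod>i<n. gi i p) \<partial>R) = 1"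
    using G_int[OF acQ] by (simp add: gi_def g_def)
  have k5: "AE p in R. f p = 0 \<or> 0 < gi i p" if i: "i < n" for i
  proof -
    define h0 where "h0 p = (if g p = 0 then 1 else 0 :: ennreal)" for p
    have h0m: "h0 \<in> borel_measurable (Z \<Otimes>\<^sub>M W)" unfolding h0_def using gZW by measurable
    have h0m': "h0 \<in> borel_measurable R'" unfolding h0_def using gm by measurable
    have "(\<integral>\<^sup>+p. h0 p \<partial>Q) = (\<integral>\<^sup>+p. ennreal (g p) * h0 p \<partial>R')" by (rule gQ[OF h0m'])
    also have "\<dots> = (\<integral>\<^sup>+p. 0 \<partial>R')" by (rule nn_integral_cong) (simp add: h0_def)
    finally have "(\<integral>\<^sup>+p. h0 p \<partial>Q) = 0" by simp
    then have "(\<Sum>j<n. \<integral>\<^sup>+p. h0 (fst p j, snd p) \<partial>P) = 0" using mix_mult[OF h0m] by simp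
    then have z: "(\<integral>\<^sup>+p. h0 (fst p i, snd p) \<partial>P) = 0" using i by (simp add: sum_nonneg_eq_0_iff)
    have hm: "(\<lambda>p. h0 (fst p i, snd p)) \<in> borel_measurable R"
      using gim[OF i] unfolding h0_def gi_def[symmetric] by measurable
    have "(\<integral>\<^sup>+p. ennreal (f p) * h0 (fst p i, snd p) \<partial>R) = 0" using z fP[OF hm] by simp
    then have "AE p in R. ennreal (f p) * h0 (fst p i, snd p) = 0"
      by (subst (asm) nn_integral_0_iff_AE) (use fm hm in measurable)
    then show ?thesis
    proof eventually_elim
      case (elim p)
      then show ?case using fnn[of p] gnn[of "(fst p i, snd p)"] by (auto simp: h0_def gi_def split: if_splits)
    qed
  qed
  have k6: "AE p in R. (\<Sum>i<n. ennreal (f p) * ennreal (ln (gi i p))) + ennreal (f p) + ennreal (-(f p * ln (f p)))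
    \<le> ennreal (f p * ln (f p)) + (\<Sum>i<n. ennreal (f p) * ennreal (- ln (gi i p))) + ennreal (\<Prod>i<n. gi i p)"
  proof -
    have "AE p in R. \<forall>i\<in>{..<n}. f p = 0 \<or> 0 < gi i p"
      by (rule AE_finite_allI) (use k5 in auto)
    then show ?thesis
    proof eventually_elim
      case (elim p)
      have pos: "f p = 0 \<or> (\<forall>i<n. 0 < gi i p)" using elim by auto
      have y: "\<forall>i<n. 0 \<le> gi i p" by (simp add: gi_def gnn)
      show ?case by (rule gibbs_pt[OF fnn y pos])
    qed
  qed
  have m1: "(\<lambda>p. ennreal (f p) * ennreal (c * ln (gi i p))) \<in> borel_measurable R" if "i < n" for i c
    using fm gim[OF that] by measurable
  have m2: "(\<lambda>p. ennreal (f p) * ennreal (- ln (gi i p))) \<in> borel_measurable R" if "i < n" for i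
    using fm gim[OF that] by measurable
  have m3: "(\<lambda>p. ennreal (f p) * ennreal (ln (gi i p))) \<in> borel_measurable R" if "i < n" for i
    using fm gim[OF that] by measurable
  have mG: "(\<lambda>p. ennreal (\<Prod>i<n. gi i p)) \<in> borel_measurable R"
    using gim by (intro measurable_compose[OF _ measurable_ennreal] borel_measurable_prod) auto
  have mf1: "(\<lambda>p. ennreal (f p * ln (f p))) \<in> borel_measurable R" using fm by measurable
  have mf2: "(\<lambda>p. ennreal (-(f p * ln (f p)))) \<in> borel_measurable R" using fm by measurable
  have mf3: "(\<lambda>p. ennreal (f p)) \<in> borel_measurable R" using fm by measurable
  have mS1: "(\<lambda>p. \<Sum>i<n. ennreal (f p) * ennreal (ln (gi i p))) \<in> borel_measurable R"
    using m3 by (intro borel_measurable_sum) auto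
  have mS2: "(\<lambda>p. \<Sum>i<n. ennreal (f p) * ennreal (- ln (gi i p))) \<in> borel_measurable R"
    using m2 by (intro borel_measurable_sum) auto
  have IL: "(\<integral>\<^sup>+p. (\<Sum>i<n. ennreal (f p) * ennreal (ln (gi i p))) + ennreal (f p) + ennreal (-(f p * ln (f p))) \<partial>R)
     = (\<Sum>i<n. Bp i) + 1 + Xm"
  proof -
    have sB: "(\<integral>\<^sup>+p. (\<Sum>i<n. ennreal (f p) * ennreal (ln (gi i p))) \<partial>R) = (\<Sum>i<n. Bp i)"
      unfolding Bp_def by (rule nn_integral_sum) (use m3 in auto)
    show ?thesis using mS1 mf2 mf3 k3 sB by (simp add: nn_integral_add Xm_def)
  qed
  have IR: "(\<integral>\<^sup>+p. ennreal (f p * ln (f p)) + (\<Sum>i<n. ennreal (f p) * ennreal (- ln (gi i p))) + ennreal (\<Prod>i<n. gi i p) \<partial>R)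
     = Xp + (\<Sum>i<n. Bm i) + 1"
  proof -
    have sB: "(\<integral>\<^sup>+p. (\<Sum>i<n. ennreal (f p) * ennreal (- ln (gi i p))) \<partial>R) = (\<Sum>i<n. Bm i)"
      unfolding Bm_def by (rule nn_integral_sum) (use m2 in auto)
    show ?thesis using mS2 mf1 mG k4 sB by (simp add: nn_integral_add Xp_def)
  qed
  have "(\<Sum>i<n. Bp i) + 1 + Xm \<le> Xp + (\<Sum>i<n. Bm i) + 1"
    unfolding IL[symmetric] IR[symmetric] by (rule nn_integral_mono_AE[OF k6])
  then have H: "of_nat n * Yp + 1 + Xm \<le> Xp + of_nat n * Ym + 1" unfolding kYp kYm .
  show ?thesis unfolding KP KQ by (rule final_alg[OF n Xm1 Ym1 H])
qed

end

theorem theorem2: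
  fixes Z :: "'z measure" and W :: "'w measure"
    and l :: "'w \<Rightarrow> 'z \<Rightarrow> real"
    and \<mu> \<mu>' :: "'z measure" and n :: nat
    and A :: "(nat \<Rightarrow> 'z) \<Rightarrow> 'w measure"
  assumes l_meas: "(\<lambda>(w, z). l w z) \<in> borel_measurable (W \<Otimes>\<^sub>M Z)"
    and l_nonneg: "\<And>w z. w \<in> space W \<Longrightarrow> z \<in> space Z \<Longrightarrow> 0 \<le> l w z"
    and \<mu>: "prob_space \<mu>" "sets \<mu> = sets Z"
    and \<mu>': "prob_space \<mu>'" "sets \<mu>' = sets Z"
    and n: "1 \<le> n"
    and A: "A \<in> measurable (PiM {..<n} (\<lambda>_. Z)) (prob_algebra W)"
    and gen_def: "gen_err_defined Z W l \<mu> \<mu>' n A"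
  shows "gen_err Z W l \<mu> \<mu>' n A
           \<le> D2 Z W l \<mu> \<mu>'
               (mutual_info (PiM {..<n} (\<lambda>_. Z)) W
                  (joint_law (PiM {..<n} (\<lambda>_. Z)) W (PiM {..<n} (\<lambda>_. \<mu>')) A) / ereal (real n))"
proof -
  interpret gsetup Z W \<mu>' n A unfolding gsetup_def using \<mu>' n A by blast
  interpret mu: prob_space \<mu> by (rule \<mu>(1))
  have PP: "joint_law (PiM {..<n} (\<lambda>_. Z)) W (PiM {..<n} (\<lambda>_. \<mu>')) A = P" by (simp add: P_def)
  define E1 where "E1 = (\<integral>\<^sup>+p. pop_risk l \<mu> (snd p) \<partial>P)"
  define E2 where "E2 = (\<integral>\<^sup>+p. ennreal (emp_risk l n (fst p) (snd p)) \<partial>P)"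
  define F1 where "F1 = (\<integral>\<^sup>+p. pop_risk l \<mu> (snd p) \<partial>Q)"
  define F2 where "F2 = (\<integral>\<^sup>+p. ennreal (l (snd p) (fst p)) \<partial>Q)"
  have gen: "gen_err Z W l \<mu> \<mu>' n A = enn2ereal E1 - enn2ereal E2"
    unfolding gen_err_def Let_def PP E1_def E2_def ..
  have gd: "\<not> (E1 = \<infinity> \<and> E2 = \<infinity>)"
    using gen_def unfolding gen_err_defined_def Let_def PP E1_def E2_def .
  have lm': "(\<lambda>(w, z). ennreal (l w z)) \<in> borel_measurable (W \<Otimes>\<^sub>M \<mu>)"
    using l_meas unfolding measurable_cong_sets[OF sets_pair_measure_cong[OF refl \<mu>(2)] refl] by measurable
  have prm: "pop_risk l \<mu> \<in> borel_measurable W"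
    unfolding pop_risk_def[abs_def] using mu.borel_measurable_nn_integral[OF lm'] by simp
  have F1E1: "F1 = E1" unfolding F1_def E1_def by (rule mix_snd[OF prm])
  have lsw: "(\<lambda>p. ennreal (l (snd p) (fst p))) \<in> borel_measurable (Z \<Otimes>\<^sub>M W)"
    using measurable_comp[OF measurable_pair_swap' l_meas] by (simp add: comp_def case_prod_beta')
  have F2E2: "F2 = E2"
  proof -
    have mi: "(\<lambda>p. ennreal (l (snd p) (fst p i))) \<in> borel_measurable P" if "i < n" for i
      unfolding measurable_cong_sets[OF P_facts(2) refl]
      using measurable_comp[OF coord_meas[OF that] lsw] by (simp add: comp_def)
    have "F2 = (\<Sum>i<n. \<integral>\<^sup>+p. ennreal (l (snd p) (fst p i)) \<partial>P) / of_nat n"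
      unfolding F2_def using mix[OF lsw] by simp
    also have "\<dots> = (\<integral>\<^sup>+p. (\<Sum>i<n. ennreal (l (snd p) (fst p i))) \<partial>P) / of_nat n"
      by (subst nn_integral_sum) (use mi in auto)
    also have "\<dots> = (\<integral>\<^sup>+p. (\<Sum>i<n. ennreal (l (snd p) (fst p i))) / of_nat n \<partial>P)"
      by (rule nn_integral_divide[symmetric]) (use mi in \<open>auto intro!: borel_measurable_sum\<close>)
    also have "\<dots> = E2" unfolding E2_def
    proof (rule nn_integral_cong)
      fix p assume p: "p \<in> space P"
      then have sp: "snd p \<in> space W" and fp: "\<And>i. i < n \<Longrightarrow> fst p i \<in> space Z"
        using P_facts(3) by (auto simp: space_pair_measure space_PiM)
      have nonneg: "\<And>i. i < n \<Longrightarrow> 0 \<le> l (snd p) (fst p i)" using l_nonneg sp fp by auto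
      have np: "0 < real n" using n by simp
      have "(\<Sum>i<n. ennreal (l (snd p) (fst p i))) / of_nat n = ennreal (\<Sum>i<n. l (snd p) (fst p i)) / ennreal (real n)"
      proof -
        have "(\<Sum>i<n. ennreal (l (snd p) (fst p i))) = ennreal (\<Sum>i<n. l (snd p) (fst p i))"
          by (rule sum_ennreal) (use nonneg in auto)
        then show ?thesis by (simp add: ennreal_of_nat_eq_real_of_nat)
      qed
      also have "\<dots> = ennreal ((\<Sum>i<n. l (snd p) (fst p i)) / real n)"
        using nonneg np by (intro divide_ennreal) (auto intro: sum_nonneg)
      also have "\<dots> = ennreal (emp_risk l n (fst p) (snd p))" by (simp add: emp_risk_def)
      finally show "(\<Sum>i<n. ennreal (l (snd p) (fst p i))) / of_nat n = ennreal (emp_risk l n (fst p) (snd p))" .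
    qed
    finally show ?thesis .
  qed
  have MI: "mutual_info Z W Q \<le> mutual_info (PiM {..<n} (\<lambda>_. Z)) W P / ereal (real n)"
    unfolding MI_Q MI_P by (rule MI_main)
  have mem: "enn2ereal E1 - enn2ereal E2 \<in>
     { enn2ereal (\<integral>\<^sup>+ p. pop_risk l \<mu> (snd p) \<partial>J) - enn2ereal (\<integral>\<^sup>+ p. ennreal (l (snd p) (fst p)) \<partial>J)
     | K J. K \<in> measurable Z (prob_algebra W) \<and> J = joint_law Z W \<mu>' K
          \<and> mutual_info Z W J \<le> mutual_info (PiM {..<n} (\<lambda>_. Z)) W P / ereal (real n)
          \<and> \<not> ((\<integral>\<^sup>+ p. pop_risk l \<mu> (snd p) \<partial>J) = \<infinity> \<and>
               (\<integral>\<^sup>+ p. ennreal (l (snd p) (fst p)) \<partial>J) = \<infinity>) }"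
    using K_meas MI gd F1E1 F2E2 unfolding F1_def F2_def Q_def
    by blast
  show ?thesis unfolding gen PP D2_def by (rule Sup_upper[OF mem])
qed

end
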